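(* Let $A\in\mathbb{R}^{n\times n}$ be monotone and let $A=P_1-R_1+S_1=P_2-R_2+S_2=P_3-R_3+S_3=P_4-R_4+S_4$ be four double weak regular splittings of $A$. Suppose $1\notin\sigma(S_2P_1^{-1})$ and $1\notin\sigma(S_4P_3^{-1})$. Define $\widehat{A}_1=(I-S_2P_1^{-1})A$, $\widehat{P}_1=P_2$, $\widehat{R}_1=R_2-S_2P_1^{-1}R_1$, and $\widehat{A}_2=(I-S_4P_3^{-1})A$, $\widehat{P}_2=P_4$, $\widehat{R}_2=R_4-S_4P_3^{-1}R_3$, and suppose $\widehat{A}_i^{-1}\geq 0$ for $i=1,2$. If $\widehat{P}_1^{-1}\widehat{A}_1\geq\widehat{P}_2^{-1}\widehat{A}_2$ and $\widehat{P}_1^{-1}\widehat{R}_1\geq\widehat{P}_2^{-1}\widehat{R}_2$, then $\rho(W_{12})\leq\rho(W_{34})<1$, where $$W_{12}=\begin{pmatrix} P_2^{-1}R_2-P_2^{-1}S_2P_1^{-1}R_1 & P_2^{-1}S_2P_1^{-1}S_1\\ I & 0\end{pmatrix},\qquad W_{34}=\begin{pmatrix} P_4^{-1}R_4-P_4^{-1}S_4P_3^{-1}R_3 & P_4^{-1}S_4P_3^{-1}S_3\\ I & 0\end{pmatrix}.$$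
   Context: Inequalities are entrywise; $\rho$ is the spectral radius, $\sigma$ the spectrum. $A$ is monotone if $A$ is nonsingular and $A^{-1}\geq 0$. A double splitting $A=P-R+S$ with $P$ nonsingular is a double weak regular splitting if $P^{-1}\geq 0$, $P^{-1}R\geq0$, $P^{-1}S\leq0$. *)

theory Defs
  imports "Jordan_Normal_Form.Spectral_Radius"
begin

definition minv :: "real mat \<Rightarrow> real mat" where
  "minv A = (SOME B. inverts_mat A B \<and> inverts_mat B A)"

definition monotone_mat :: "real mat \<Rightarrow> bool" where
  "monotone_mat A \<longleftrightarrow> invertible_mat A \<and> minv A \<ge> 0\<^sub>m (dim_row A) (dim_col A)"

definition double_weak_regular_splitting ::
  "real mat \<Rightarrow> real mat \<Rightarrow> real mat \<Rightarrow> real mat \<Rightarrow> bool" where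
  "double_weak_regular_splitting A P R S \<longleftrightarrow>
     A = P - R + S \<and> invertible_mat P \<and>
     minv P \<ge> 0\<^sub>m (dim_row P) (dim_col P) \<and>
     minv P * R \<ge> 0\<^sub>m (dim_row P) (dim_col R) \<and>
     minv P * S \<le> 0\<^sub>m (dim_row P) (dim_col S)"

definition rho :: "real mat \<Rightarrow> real" where
  "rho A = spectral_radius (map_mat complex_of_real A)"

end

theory Submission
  imports Defs
begin
lemma rho_ub:
  fixes W :: "real mat"
  assumes W: "W \<in> carrier_mat m m" and m: "m > 0"
    and nn: "\<And>i j. i < m \<Longrightarrow> j < m \<Longrightarrow> W $$ (i,j) \<ge> 0"
    and z: "\<And>i. i < m \<Longrightarrow> z i > 0"
    and le: "\<And>i. i < m \<Longrightarrow> (\<Sum>j<m. W $$ (i,j) * z j) \<le> \<beta> * z i"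
  shows "rho W \<le> \<beta>"
proof -
  define Wc where "Wc = map_mat complex_of_real W"
  have Wc: "Wc \<in> carrier_mat m m" using W unfolding Wc_def by auto
  from spectral_radius_mem_max(1)[OF Wc m] obtain mu where
    mu: "mu \<in> spectrum Wc" and r: "rho W = cmod mu" unfolding rho_def Wc_def[symmetric] by auto
  from mu obtain v where ev: "eigenvector Wc v mu" unfolding spectrum_def eigenvalue_def by auto
  hence v: "v \<in> carrier_vec m" "v \<noteq> 0\<^sub>v m" and eq: "Wc *\<^sub>v v = mu \<cdot>\<^sub>v v"
    unfolding eigenvector_def using Wc by auto
  define f where "f i = cmod (v $ i) / z i" for i
  define t where "t = Max (f ` {..<m})"
  have fin: "finite (f ` {..<m})" and ne: "f ` {..<m} \<noteq> {}" using m by auto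
  from Max_in[OF fin ne] obtain i0 where i0: "i0 < m" "t = f i0" unfolding t_def by auto
  have fle: "f i \<le> t" if "i < m" for i unfolding t_def using Max_ge[OF fin] that by auto
  have vle: "cmod (v $ j) \<le> t * z j" if "j < m" for j
    using fle[OF that] z[OF that] unfolding f_def by (simp add: divide_le_eq)
  obtain k where k: "k < m" "v $ k \<noteq> 0"
    using v by (metis eq_vecI carrier_vecD index_zero_vec)
  have "t \<ge> f k" using fle k by auto
  moreover have "f k > 0" unfolding f_def using k z[of k] by auto
  ultimately have tpos: "t > 0" by auto
  have key: "cmod mu * cmod (v $ i) \<le> t * (\<beta> * z i)" if i: "i < m" for i
  proof -
    have "mu * v $ i = (Wc *\<^sub>v v) $ i" using eq i v by simp
    also have "\<dots> = (\<Sum>j<m. complex_of_real (W $$ (i,j)) * v $ j)"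
      using i v W unfolding Wc_def by (auto simp: scalar_prod_def lessThan_atLeast0 intro!: sum.cong)
    finally have e: "mu * v $ i = (\<Sum>j<m. complex_of_real (W $$ (i,j)) * v $ j)" .
    have "cmod mu * cmod (v $ i) = cmod (\<Sum>j<m. complex_of_real (W $$ (i,j)) * v $ j)"
      using e by (metis norm_mult)
    also have "\<dots> \<le> (\<Sum>j<m. cmod (complex_of_real (W $$ (i,j)) * v $ j))" by (rule norm_sum)
    also have "\<dots> = (\<Sum>j<m. W $$ (i,j) * cmod (v $ j))"
      using nn[OF i] by (intro sum.cong) (auto simp: norm_mult)
    also have "\<dots> \<le> (\<Sum>j<m. W $$ (i,j) * (t * z j))"
      using nn[OF i] vle by (intro sum_mono mult_left_mono) auto
    also have "\<dots> = t * (\<Sum>j<m. W $$ (i,j) * z j)" by (simp add: sum_distrib_left algebra_simps)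
    also have "\<dots> \<le> t * (\<beta> * z i)" using le[OF i] tpos by auto
    finally show ?thesis .
  qed
  have "cmod mu * (t * z i0) \<le> t * (\<beta> * z i0)"
    using key[OF i0(1)] i0 z[OF i0(1)] unfolding f_def by auto
  hence "cmod mu * (t * z i0) \<le> \<beta> * (t * z i0)" by (simp add: algebra_simps)
  moreover have "t * z i0 > 0" using tpos z[OF i0(1)] by auto
  ultimately have "cmod mu \<le> \<beta>" by (rule mult_right_le_imp_le)
  thus ?thesis using r by simp
qed

lemma map_of_real_mult:
  fixes A B :: "real mat"
  assumes "A \<in> carrier_mat n k" "B \<in> carrier_mat k m"
  shows "map_mat complex_of_real (A * B) = map_mat complex_of_real A * map_mat complex_of_real B"
  using assms by (intro eq_matI) (auto simp: scalar_prod_def)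

lemma map_of_real_pow:
  fixes A :: "real mat"
  assumes A: "A \<in> carrier_mat n n"
  shows "map_mat complex_of_real (A ^\<^sub>m k) = (map_mat complex_of_real A) ^\<^sub>m k"
proof (induct k)
  case 0 show ?case using A by (intro eq_matI) auto
next
  case (Suc k)
  have "map_mat complex_of_real (A ^\<^sub>m Suc k) = map_mat complex_of_real (A ^\<^sub>m k * A)" by simp
  also have "\<dots> = map_mat complex_of_real (A ^\<^sub>m k) * map_mat complex_of_real A"
    by (rule map_of_real_mult[OF pow_carrier_mat[OF A] A])
  finally show ?case using Suc by simp
qed

lemma smult_pow_mat:
  fixes A :: "real mat"
  assumes A: "A \<in> carrier_mat n n"
  shows "(a \<cdot>\<^sub>m A) ^\<^sub>m k = (a ^ k) \<cdot>\<^sub>m (A ^\<^sub>m k)"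
proof (induct k)
  case 0 show ?case using A by (intro eq_matI) auto
next
  case (Suc k)
  have "(a \<cdot>\<^sub>m A) ^\<^sub>m Suc k = ((a ^ k) \<cdot>\<^sub>m (A ^\<^sub>m k)) * (a \<cdot>\<^sub>m A)" using Suc by simp
  also have "\<dots> = (a ^ Suc k) \<cdot>\<^sub>m (A ^\<^sub>m Suc k)"
    using A by (intro eq_matI) (auto simp: scalar_prod_def sum_distrib_left algebra_simps)
  finally show ?case .
qed

lemma pow_Suc_left_mat:
  fixes A :: "real mat"
  assumes A: "A \<in> carrier_mat n n"
  shows "A * A ^\<^sub>m k = A ^\<^sub>m Suc k"
proof (induct k)
  case 0 show ?case using A by simp
next
  case (Suc k)
  have "A * A ^\<^sub>m Suc k = A * (A ^\<^sub>m k * A)" by simp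
  also have "\<dots> = (A * A ^\<^sub>m k) * A" using A by (simp add: assoc_mult_mat[OF A pow_carrier_mat[OF A] A])
  also have "\<dots> = A ^\<^sub>m Suc (Suc k)" using Suc by simp
  finally show ?case .
qed

lemma rho_nonneg:
  fixes W :: "real mat"
  assumes W: "W \<in> carrier_mat m m" and m: "m > 0"
  shows "rho W \<ge> 0"
proof -
  have Wc: "map_mat complex_of_real W \<in> carrier_mat m m" using W by auto
  from spectral_radius_mem_max(1)[OF Wc m] show ?thesis unfolding rho_def by auto
qed

lemma rho_scaled_lt1:
  fixes W :: "real mat"
  assumes W: "W \<in> carrier_mat m m" and m: "m > 0" and a: "a > 0" and lt: "a * rho W < 1"
  shows "spectral_radius (map_mat complex_of_real (a \<cdot>\<^sub>m W)) < 1"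
proof -
  define Wc where "Wc = map_mat complex_of_real W"
  define T where "T = map_mat complex_of_real (a \<cdot>\<^sub>m W)"
  have Wc: "Wc \<in> carrier_mat m m" using W unfolding Wc_def by auto
  have T: "T \<in> carrier_mat m m" using W unfolding T_def by auto
  from spectral_radius_mem_max(1)[OF T m] obtain mu where
    mu: "mu \<in> spectrum T" and r: "spectral_radius T = cmod mu" by auto
  from mu obtain v where ev: "eigenvector T v mu" unfolding spectrum_def eigenvalue_def by auto
  hence v: "v \<in> carrier_vec m" "v \<noteq> 0\<^sub>v m" and eq: "T *\<^sub>v v = mu \<cdot>\<^sub>v v"
    unfolding eigenvector_def using T by auto
  have "T *\<^sub>v v = complex_of_real a \<cdot>\<^sub>v (Wc *\<^sub>v v)"
    using v W unfolding T_def Wc_def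
    by (intro eq_vecI) (auto simp: scalar_prod_def sum_distrib_left algebra_simps)
  hence "Wc *\<^sub>v v = (mu / complex_of_real a) \<cdot>\<^sub>v v" using eq a
    by (metis (no_types, lifting) divide_self_if nonzero_mult_div_cancel_left of_real_eq_0_iff
        less_irrefl smult_smult_assoc one_smult_vec times_divide_eq_left)
  hence "eigenvector Wc v (mu / complex_of_real a)" using v Wc unfolding eigenvector_def by auto
  hence "mu / complex_of_real a \<in> spectrum Wc" unfolding spectrum_def eigenvalue_def by auto
  from spectral_radius_mem_max(2)[OF Wc m] this
  have "cmod (mu / complex_of_real a) \<le> rho W" unfolding rho_def Wc_def by auto
  hence "cmod mu \<le> a * rho W" using a by (simp add: norm_divide divide_le_eq mult.commute)
  thus ?thesis using r lt unfolding T_def by auto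
qed

lemma rho_lt_vec:
  fixes W :: "real mat"
  assumes W: "W \<in> carrier_mat m m" and m: "m > 0"
    and nn: "\<And>i j. i < m \<Longrightarrow> j < m \<Longrightarrow> W $$ (i,j) \<ge> 0"
    and lt: "rho W < \<beta>"
  shows "\<exists>z. (\<forall>i<m. z i > 0) \<and> (\<forall>i<m. (\<Sum>j<m. W $$ (i,j) * z j) \<le> \<beta> * z i)"
proof -
  have r0: "rho W \<ge> 0" by (rule rho_nonneg[OF W m])
  define b' where "b' = (rho W + \<beta>) / 2"
  have b'pos: "b' > 0" and b'lt: "b' < \<beta>" and rb: "rho W < b'" using r0 lt unfolding b'_def by auto
  have bpos: "\<beta> > 0" using b'pos b'lt by auto
  define a where "a = 1 / b'"
  have a: "a > 0" using b'pos unfolding a_def by auto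
  have "a * rho W < 1" using rb b'pos unfolding a_def by (simp add: divide_less_eq)
  from rho_scaled_lt1[OF W m a this]
  have "spectral_radius (map_mat complex_of_real (a \<cdot>\<^sub>m W)) < 1" .
  from spectral_radius_jnf_norm_bound_less_1_upper_triangular[OF _ this]
  obtain c where c: "\<And>k. norm_bound (map_mat complex_of_real (a \<cdot>\<^sub>m W) ^\<^sub>m k) c"
    using W by fastforce
  have Wk: "(W ^\<^sub>m k) $$ (i,j) \<le> c * b' ^ k" if ij: "i < m" "j < m" for i j k
  proof -
    have aW: "a \<cdot>\<^sub>m W \<in> carrier_mat m m" using W by auto
    have "map_mat complex_of_real (a \<cdot>\<^sub>m W) ^\<^sub>m k = map_mat complex_of_real ((a \<cdot>\<^sub>m W) ^\<^sub>m k)"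
      by (rule map_of_real_pow[OF aW, symmetric])
    also have "\<dots> = map_mat complex_of_real ((a ^ k) \<cdot>\<^sub>m (W ^\<^sub>m k))" by (simp add: smult_pow_mat[OF W])
    finally have "norm_bound (map_mat complex_of_real ((a ^ k) \<cdot>\<^sub>m (W ^\<^sub>m k))) c" using c by metis
    hence "cmod (complex_of_real (a ^ k * (W ^\<^sub>m k) $$ (i,j))) \<le> c"
      using ij W unfolding norm_bound_def by auto
    hence "a ^ k * (W ^\<^sub>m k) $$ (i,j) \<le> c" by (metis abs_le_D1 norm_of_real)
    hence "(W ^\<^sub>m k) $$ (i,j) \<le> c / a ^ k" using a by (simp add: le_divide_eq mult.commute)
    thus ?thesis unfolding a_def by (simp add: power_one_over)
  qed
  define c' where "c' = max c 1"
  have c': "c' > 0" "c \<le> c'" unfolding c'_def by auto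
  have "b' / \<beta> < 1" using b'lt bpos by auto
  from real_arch_pow_inv[OF _ this, of "1 / (real m * c')"] m c'
  obtain N where N: "(b' / \<beta>) ^ N < 1 / (real m * c')" by auto
  define K where "K = Suc N"
  have qK: "(b' / \<beta>) ^ K \<le> (b' / \<beta>) ^ N" unfolding K_def
    using b'pos b'lt bpos by (intro power_decreasing) auto
  define s where "s k i = (\<Sum>l<m. (W ^\<^sub>m k) $$ (i,l))" for k i
  have sK: "s K i \<le> \<beta> ^ K" if i: "i < m" for i
  proof -
    have "s K i \<le> (\<Sum>l<m. c' * b' ^ K)" unfolding s_def
      proof (intro sum_mono)
      fix l assume "l \<in> {..<m}"
      hence "(W ^\<^sub>m K) $$ (i,l) \<le> c * b' ^ K" using Wk[OF i] by auto
      also have "\<dots> \<le> c' * b' ^ K" using c' b'pos by (intro mult_right_mono) auto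
      finally show "(W ^\<^sub>m K) $$ (i,l) \<le> c' * b' ^ K" .
    qed
    also have "\<dots> = real m * c' * b' ^ K" by simp
    also have "\<dots> \<le> \<beta> ^ K"
    proof -
      have "(b' / \<beta>) ^ K < 1 / (real m * c')" using qK N by auto
      hence "real m * c' * (b' / \<beta>) ^ K < 1" using m c' by (simp add: less_divide_eq mult.commute)
      hence "real m * c' * b' ^ K < \<beta> ^ K" using bpos by (simp add: power_divide divide_less_eq)
      thus ?thesis by simp
    qed
    finally show ?thesis .
  qed
  have s0: "s 0 i = 1" if i: "i < m" for i
  proof -
    have "s 0 i = (\<Sum>l<m. if i = l then 1 else 0)" unfolding s_def using i W by (intro sum.cong) auto
    also have "\<dots> = 1" using i by simp
    finally show ?thesis .
  qed
  have snn: "s k i \<ge> 0" if i: "i < m" for k i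
  proof -
    have "(W ^\<^sub>m k) $$ (i,l) \<ge> 0" if "l < m" for l
      using i that
    proof (induct k arbitrary: i l)
      case 0 thus ?case using W by simp
    next
      case (Suc k)
      have "(W ^\<^sub>m Suc k) $$ (i,l) = (\<Sum>j<m. (W ^\<^sub>m k) $$ (i,j) * W $$ (j,l))"
        using Suc.prems W by (auto simp: scalar_prod_def lessThan_atLeast0 intro!: sum.cong)
      also have "\<dots> \<ge> 0" using Suc nn by (intro sum_nonneg mult_nonneg_nonneg) auto
      finally show ?case .
    qed
    thus ?thesis unfolding s_def by (intro sum_nonneg) auto
  qed
  have sS: "(\<Sum>j<m. W $$ (i,j) * s k j) = s (Suc k) i" if i: "i < m" for i k
  proof -
    have "(\<Sum>j<m. W $$ (i,j) * s k j) = (\<Sum>l<m. \<Sum>j<m. W $$ (i,j) * (W ^\<^sub>m k) $$ (j,l))"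
      unfolding s_def sum_distrib_left by (rule sum.swap)
    also have "\<dots> = (\<Sum>l<m. (W * W ^\<^sub>m k) $$ (i,l))"
      using i W by (intro sum.cong) (auto simp: scalar_prod_def lessThan_atLeast0 intro!: sum.cong)
    also have "\<dots> = s (Suc k) i" unfolding s_def pow_Suc_left_mat[OF W] ..
    finally show ?thesis .
  qed
  define z where "z i = (\<Sum>k<K. s k i / \<beta> ^ k)" for i
  show ?thesis
  proof (intro exI[of _ z] conjI allI impI)
    fix i assume i: "i < m"
    have "z i = (\<Sum>k<Suc N. s k i / \<beta> ^ k)" unfolding z_def K_def ..
    also have "\<dots> = s 0 i / \<beta> ^ 0 + (\<Sum>k<N. s (Suc k) i / \<beta> ^ (Suc k))" by (rule sum.lessThan_Suc_shift)
    also have "\<dots> \<ge> 1" using s0[OF i] snn[OF i] bpos by (auto intro!: sum_nonneg)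
    finally show "z i > 0" by auto
  next
    fix i assume i: "i < m"
    have "(\<Sum>j<m. W $$ (i,j) * z j) = (\<Sum>k<K. (\<Sum>j<m. W $$ (i,j) * s k j) / \<beta> ^ k)"
      proof -
      have "(\<Sum>j<m. W $$ (i,j) * z j) = (\<Sum>j<m. \<Sum>k<K. W $$ (i,j) * s k j / \<beta> ^ k)"
        unfolding z_def sum_distrib_left by simp
      also have "\<dots> = (\<Sum>k<K. \<Sum>j<m. W $$ (i,j) * s k j / \<beta> ^ k)" by (rule sum.swap)
      also have "\<dots> = (\<Sum>k<K. (\<Sum>j<m. W $$ (i,j) * s k j) / \<beta> ^ k)" by (simp add: sum_divide_distrib)
      finally show ?thesis .
    qed
    also have "\<dots> = (\<Sum>k<K. s (Suc k) i / \<beta> ^ k)" using sS[OF i] by simp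
    also have "\<dots> = \<beta> * (\<Sum>k<K. s (Suc k) i / \<beta> ^ Suc k)"
      using bpos by (simp add: sum_distrib_left)
    also have "\<dots> = \<beta> * (z i + s K i / \<beta> ^ K - s 0 i)"
    proof -
      have "(\<Sum>k<K. s (Suc k) i / \<beta> ^ Suc k - s k i / \<beta> ^ k) = s K i / \<beta> ^ K - s 0 i / \<beta> ^ 0"
        by (rule sum_lessThan_telescope)
      thus ?thesis unfolding z_def by (simp add: sum_subtractf)
    qed
    also have "\<dots> \<le> \<beta> * z i"
    proof -
      have "s K i / \<beta> ^ K \<le> 1" using sK[OF i] bpos by (simp add: divide_le_eq)
      thus ?thesis using s0[OF i] bpos by (simp add: mult_left_mono)
    qed
    finally show "(\<Sum>j<m. W $$ (i,j) * z j) \<le> \<beta> * z i" .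
  qed
qed

lemma minv_props:
  fixes A :: "real mat"
  assumes A: "A \<in> carrier_mat n n" and inv: "invertible_mat A"
  shows "minv A \<in> carrier_mat n n" "A * minv A = 1\<^sub>m n" "minv A * A = 1\<^sub>m n"
proof -
  from inv obtain B where "inverts_mat A B \<and> inverts_mat B A" unfolding invertible_mat_def by blast
  hence ex: "\<exists>B. inverts_mat A B \<and> inverts_mat B A" by blast
  have h: "inverts_mat A (minv A) \<and> inverts_mat (minv A) A"
    unfolding minv_def by (rule someI_ex[OF ex])
  hence e1: "A * minv A = 1\<^sub>m n" and e2: "minv A * A = 1\<^sub>m (dim_row (minv A))"
    using A unfolding inverts_mat_def by auto
  from e2 have "dim_row (minv A) = dim_col (minv A * A)" by simp
  also have "\<dots> = n" using A by simp
  finally have r: "dim_row (minv A) = n" .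
  from e1 have "dim_col (minv A) = n" by (metis index_mult_mat(3) index_one_mat(3))
  with r show "minv A \<in> carrier_mat n n" by auto
  show "A * minv A = 1\<^sub>m n" by fact
  show "minv A * A = 1\<^sub>m n" using e2 r by simp
qed

lemma sum_split_add: "(\<Sum>j<n+k. f j) = (\<Sum>j<n. f j) + (\<Sum>j<k. f (n+j::nat)) " for f :: "nat \<Rightarrow> real"
  by (induct k) auto

lemma block_sum:
  fixes B C :: "real mat"
  assumes B: "B \<in> carrier_mat n n" and C: "C \<in> carrier_mat n n" and i: "i < n + n"
  shows "(\<Sum>j<n+n. four_block_mat B C (1\<^sub>m n) (0\<^sub>m n n) $$ (i,j) * z j) =
    (if i < n then (\<Sum>j<n. B $$ (i,j) * z j) + (\<Sum>j<n. C $$ (i,j) * z (n+j)) else z (i - n))"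
proof -
  let ?W = "four_block_mat B C (1\<^sub>m n) (0\<^sub>m n n)"
  have "(\<Sum>j<n+n. ?W $$ (i,j) * z j) = (\<Sum>j<n. ?W $$ (i,j) * z j) + (\<Sum>j<n. ?W $$ (i,n+j) * z (n+j))"
    by (rule sum_split_add)
  also have "\<dots> = (if i < n then (\<Sum>j<n. B $$ (i,j) * z j) + (\<Sum>j<n. C $$ (i,j) * z (n+j))
      else (\<Sum>j<n. (if i - n = j then 1 else 0) * z j))"
    using B C i by (auto intro!: sum.cong)
  also have "\<dots> = (if i < n then (\<Sum>j<n. B $$ (i,j) * z j) + (\<Sum>j<n. C $$ (i,j) * z (n+j)) else z (i - n))"
  proof -
    have "(\<Sum>j<n. (if i - n = j then 1 else 0) * z j) = (\<Sum>j<n. if i - n = j then z j else 0)"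
      by (intro sum.cong) auto
    also have "\<dots> = (if i - n < n then z (i - n) else 0)" by (simp add: sum.delta)
    finally show ?thesis using i by auto
  qed
  finally show ?thesis .
qed

lemma block_nonneg:
  fixes B C :: "real mat"
  assumes B: "B \<in> carrier_mat n n" and C: "C \<in> carrier_mat n n"
    and Bn: "\<And>i j. i < n \<Longrightarrow> j < n \<Longrightarrow> B $$ (i,j) \<ge> 0"
    and Cn: "\<And>i j. i < n \<Longrightarrow> j < n \<Longrightarrow> C $$ (i,j) \<ge> 0"
  shows "four_block_mat B C (1\<^sub>m n) (0\<^sub>m n n) \<in> carrier_mat (n+n) (n+n)"
    "\<And>i j. i < n+n \<Longrightarrow> j < n+n \<Longrightarrow> four_block_mat B C (1\<^sub>m n) (0\<^sub>m n n) $$ (i,j) \<ge> 0"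
  using B C Bn Cn by auto

lemma add_alg:
  fixes E U X XY XZ :: "real mat"
  assumes "E \<in> carrier_mat n n" "U \<in> carrier_mat n n" "X \<in> carrier_mat n n" "XY \<in> carrier_mat n n" "XZ \<in> carrier_mat n n"
  shows "(E - U + X) - (X - XY + XZ) = E - (U - XY) - XZ"
  using assms by (intro eq_matI) auto

lemma split_inv_mult:
  fixes A P R S :: "real mat"
  assumes c: "A \<in> carrier_mat n n" "P \<in> carrier_mat n n" "R \<in> carrier_mat n n" "S \<in> carrier_mat n n"
    and s: "double_weak_regular_splitting A P R S"
  shows "minv P * A = 1\<^sub>m n - minv P * R + minv P * S" "minv P \<in> carrier_mat n n"
    "\<And>i j. i < n \<Longrightarrow> j < n \<Longrightarrow> (minv P * R) $$ (i,j) \<ge> 0"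
    "\<And>i j. i < n \<Longrightarrow> j < n \<Longrightarrow> (minv P * S) $$ (i,j) \<le> 0"
    "\<And>i j. i < n \<Longrightarrow> j < n \<Longrightarrow> minv P $$ (i,j) \<ge> 0"
proof -
  from s have A: "A = P - R + S" and inv: "invertible_mat P" and nn: "minv P \<ge> 0\<^sub>m n n"
    and pr: "minv P * R \<ge> 0\<^sub>m n n" and ps: "minv P * S \<le> 0\<^sub>m n n"
    unfolding double_weak_regular_splitting_def using c by auto
  note mp = minv_props[OF c(2) inv]
  show "minv P \<in> carrier_mat n n" by (rule mp(1))
  have "minv P * A = minv P * (P - R) + minv P * S"
    unfolding A using c mp by (intro mult_add_distrib_mat) auto
  also have "minv P * (P - R) = minv P * P - minv P * R"
    using c mp by (intro mult_minus_distrib_mat) auto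
  finally show "minv P * A = 1\<^sub>m n - minv P * R + minv P * S" using mp by simp
  show "\<And>i j. i < n \<Longrightarrow> j < n \<Longrightarrow> (minv P * R) $$ (i,j) \<ge> 0"
    using pr unfolding less_eq_mat_def by auto
  show "\<And>i j. i < n \<Longrightarrow> j < n \<Longrightarrow> (minv P * S) $$ (i,j) \<le> 0"
    using ps unfolding less_eq_mat_def by auto
  show "\<And>i j. i < n \<Longrightarrow> j < n \<Longrightarrow> minv P $$ (i,j) \<ge> 0"
    using nn unfolding less_eq_mat_def by auto
qed

lemma combo:
  fixes A P R S P' R' S' :: "real mat"
  assumes c: "A \<in> carrier_mat n n" "P \<in> carrier_mat n n" "R \<in> carrier_mat n n" "S \<in> carrier_mat n n"
     "P' \<in> carrier_mat n n" "R' \<in> carrier_mat n n" "S' \<in> carrier_mat n n"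
    and s1: "double_weak_regular_splitting A P R S"
    and s2: "double_weak_regular_splitting A P' R' S'"
  shows "minv P' * R' - minv P' * S' * minv P * R \<in> carrier_mat n n"
    "minv P' * S' * minv P * S \<in> carrier_mat n n"
    "\<And>i j. i < n \<Longrightarrow> j < n \<Longrightarrow> (minv P' * R' - minv P' * S' * minv P * R) $$ (i,j) \<ge> 0"
    "\<And>i j. i < n \<Longrightarrow> j < n \<Longrightarrow> (minv P' * S' * minv P * S) $$ (i,j) \<ge> 0"
    "minv P' * ((1\<^sub>m n - S' * minv P) * A) = 1\<^sub>m n - (minv P' * R' - minv P' * S' * minv P * R) - minv P' * S' * minv P * S"
    "minv P' * (R' - S' * minv P * R) = minv P' * R' - minv P' * S' * minv P * R"
proof -
  note a1 = split_inv_mult[OF c(1-4) s1]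
  note a2 = split_inv_mult[OF c(1) c(5-7) s2]
  define Pi where "Pi = minv P"
  define Pi' where "Pi' = minv P'"
  have Pi: "Pi \<in> carrier_mat n n" and Pi': "Pi' \<in> carrier_mat n n" using a1 a2 unfolding Pi_def Pi'_def by auto
  define X where "X = Pi' * S'"
  define Y where "Y = Pi * R"
  define Z where "Z = Pi * S"
  define U where "U = Pi' * R'"
  have X: "X \<in> carrier_mat n n" and Y: "Y \<in> carrier_mat n n" and Z: "Z \<in> carrier_mat n n"
    and U: "U \<in> carrier_mat n n" using c Pi Pi' unfolding X_def Y_def Z_def U_def by auto
  have e1: "Pi' * S' * Pi * R = X * Y" unfolding X_def Y_def
    by (rule assoc_mult_mat[of "Pi' * S'" n n Pi n R n]) (use c Pi Pi' in auto)
  have e2: "Pi' * S' * Pi * S = X * Z" unfolding X_def Z_def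
    by (rule assoc_mult_mat[of "Pi' * S'" n n Pi n S n]) (use c Pi Pi' in auto)
  have X0: "X $$ (i,j) \<le> 0" if "i < n" "j < n" for i j using a2(4) that unfolding X_def Pi'_def by auto
  have Y0: "Y $$ (i,j) \<ge> 0" if "i < n" "j < n" for i j using a1(3) that unfolding Y_def Pi_def by auto
  have Z0: "Z $$ (i,j) \<le> 0" if "i < n" "j < n" for i j using a1(4) that unfolding Z_def Pi_def by auto
  have U0: "U $$ (i,j) \<ge> 0" if "i < n" "j < n" for i j using a2(3) that unfolding U_def Pi'_def by auto
  have XY: "(X * Y) $$ (i,j) \<le> 0" if ij: "i < n" "j < n" for i j
  proof -
    have "(X * Y) $$ (i,j) = (\<Sum>k<n. X $$ (i,k) * Y $$ (k,j))"
      using X Y ij by (auto simp: scalar_prod_def lessThan_atLeast0 intro!: sum.cong)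
    also have "\<dots> \<le> 0" using X0 Y0 ij by (intro sum_nonpos mult_nonpos_nonneg) auto
    finally show ?thesis .
  qed
  have XZ: "(X * Z) $$ (i,j) \<ge> 0" if ij: "i < n" "j < n" for i j
  proof -
    have "(X * Z) $$ (i,j) = (\<Sum>k<n. X $$ (i,k) * Z $$ (k,j))"
      using X Z ij by (auto simp: scalar_prod_def lessThan_atLeast0 intro!: sum.cong)
    also have "\<dots> \<ge> 0" using X0 Z0 ij by (intro sum_nonneg mult_nonpos_nonpos) auto
    finally show ?thesis .
  qed
  show "minv P' * R' - minv P' * S' * minv P * R \<in> carrier_mat n n"
    using X Y U e1 unfolding Pi_def[symmetric] Pi'_def[symmetric] U_def[symmetric] by auto
  show "minv P' * S' * minv P * S \<in> carrier_mat n n"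
    using X Z e2 unfolding Pi_def[symmetric] Pi'_def[symmetric] by auto
  show "\<And>i j. i < n \<Longrightarrow> j < n \<Longrightarrow> (minv P' * R' - minv P' * S' * minv P * R) $$ (i,j) \<ge> 0"
    unfolding Pi_def[symmetric] Pi'_def[symmetric] U_def[symmetric] e1 using X Y U XY U0 by (auto intro: order_trans[of _ 0])
  show "\<And>i j. i < n \<Longrightarrow> j < n \<Longrightarrow> (minv P' * S' * minv P * S) $$ (i,j) \<ge> 0"
    unfolding Pi_def[symmetric] Pi'_def[symmetric] e2 using XZ by auto
  have PiA: "Pi * A = 1\<^sub>m n - Y + Z" using a1(1) unfolding Pi_def Y_def Z_def .
  have PiA': "Pi' * A = 1\<^sub>m n - U + X" using a2(1) unfolding Pi'_def U_def X_def .
  have "(1\<^sub>m n - S' * Pi) * A = 1\<^sub>m n * A - S' * Pi * A"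
    using c Pi by (intro minus_mult_distrib_mat) auto
  also have "\<dots> = A - S' * (Pi * A)" using c Pi by simp
  finally have st1: "(1\<^sub>m n - S' * Pi) * A = A - S' * (Pi * A)" .
  have "Pi' * (A - S' * (Pi * A)) = Pi' * A - Pi' * (S' * (Pi * A))"
    using c Pi Pi' by (intro mult_minus_distrib_mat) auto
  also have "Pi' * (S' * (Pi * A)) = X * (Pi * A)" unfolding X_def
    by (rule assoc_mult_mat[of Pi' n n S' n "Pi * A" n, symmetric]) (use c Pi Pi' in auto)
  also have "X * (Pi * A) = X * (1\<^sub>m n - Y) + X * Z" unfolding PiA
    using X Y Z by (intro mult_add_distrib_mat) auto
  also have "X * (1\<^sub>m n - Y) = X * 1\<^sub>m n - X * Y" using X Y by (intro mult_minus_distrib_mat) auto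
  also have "X * 1\<^sub>m n = X" using X by simp
  finally have "Pi' * ((1\<^sub>m n - S' * Pi) * A) = (1\<^sub>m n - U + X) - (X - X * Y + X * Z)"
    unfolding st1 PiA' .
  also have "\<dots> = 1\<^sub>m n - (U - X * Y) - X * Z" using X Y Z U by (intro add_alg) auto
  finally show "minv P' * ((1\<^sub>m n - S' * minv P) * A) = 1\<^sub>m n - (minv P' * R' - minv P' * S' * minv P * R) - minv P' * S' * minv P * S"
    unfolding Pi_def[symmetric] Pi'_def[symmetric] e1 e2 U_def .
  have "Pi' * (R' - S' * Pi * R) = Pi' * R' - Pi' * (S' * Pi * R)"
    using c Pi Pi' by (intro mult_minus_distrib_mat) auto
  also have "Pi' * (S' * Pi * R) = Pi' * S' * Pi * R"
  proof -
    have "Pi' * S' * Pi * R = Pi' * S' * (Pi * R)"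
      by (rule assoc_mult_mat[of "Pi' * S'" n n Pi n R n]) (use c Pi Pi' in auto)
    also have "\<dots> = Pi' * (S' * (Pi * R))"
      by (rule assoc_mult_mat[of Pi' n n S' n "Pi * R" n]) (use c Pi Pi' in auto)
    also have "S' * (Pi * R) = S' * Pi * R"
      by (rule assoc_mult_mat[of S' n n Pi n R n, symmetric]) (use c Pi Pi' in auto)
    finally show ?thesis by simp
  qed
  finally show "minv P' * (R' - S' * minv P * R) = minv P' * R' - minv P' * S' * minv P * R"
    unfolding Pi_def Pi'_def .
qed

lemma row_sum_pos:
  fixes X Q :: "real mat"
  assumes X: "X \<in> carrier_mat n n" and Q: "Q \<in> carrier_mat n n" and XQ: "X * Q = 1\<^sub>m n"
    and nn: "\<And>i j. i < n \<Longrightarrow> j < n \<Longrightarrow> X $$ (i,j) \<ge> 0" and i: "i < n"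
  shows "(\<Sum>j<n. X $$ (i,j)) > 0"
proof (rule ccontr)
  assume "\<not> ?thesis"
  hence "(\<Sum>j<n. X $$ (i,j)) = 0" using nn[OF i] by (smt (verit) lessThan_iff sum_nonneg)
  hence z: "X $$ (i,j) = 0" if "j < n" for j
    using sum_nonneg_eq_0_iff[of "{..<n}" "\<lambda>j. X $$ (i,j)"] nn[OF i] that by auto
  have "1 = (X * Q) $$ (i,i)" using XQ i by simp
  also have "\<dots> = (\<Sum>j<n. X $$ (i,j) * Q $$ (j,i))"
    using X Q i by (auto simp: scalar_prod_def lessThan_atLeast0 intro!: sum.cong)
  also have "\<dots> = 0" using z by simp
  finally show False by simp
qed

lemma sum_rows_mult:
  fixes X Y :: "real mat"
  assumes X: "X \<in> carrier_mat n n" and Y: "Y \<in> carrier_mat n n" and i: "i < n"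
  shows "(\<Sum>j<n. X $$ (i,j) * (\<Sum>k<n. Y $$ (j,k))) = (\<Sum>k<n. (X * Y) $$ (i,k))"
proof -
  have "(\<Sum>j<n. X $$ (i,j) * (\<Sum>k<n. Y $$ (j,k))) = (\<Sum>j<n. \<Sum>k<n. X $$ (i,j) * Y $$ (j,k))"
    by (simp add: sum_distrib_left)
  also have "\<dots> = (\<Sum>k<n. \<Sum>j<n. X $$ (i,j) * Y $$ (j,k))" by (rule sum.swap)
  also have "\<dots> = (\<Sum>k<n. (X * Y) $$ (i,k))"
    using X Y i by (intro sum.cong) (auto simp: scalar_prod_def lessThan_atLeast0 intro!: sum.cong)
  finally show ?thesis .
qed

lemma sum_IBC:
  fixes B C :: "real mat"
  assumes B: "B \<in> carrier_mat n n" and C: "C \<in> carrier_mat n n" and i: "i < n"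
  shows "(\<Sum>j<n. (1\<^sub>m n - B - C) $$ (i,j) * y j) = y i - (\<Sum>j<n. B $$ (i,j) * y j) - (\<Sum>j<n. C $$ (i,j) * y j)"
proof -
  have "(\<Sum>j<n. (1\<^sub>m n - B - C) $$ (i,j) * y j) = (\<Sum>j<n. (if i = j then y j else 0) - B $$ (i,j) * y j - C $$ (i,j) * y j)"
    using B C i by (intro sum.cong) (auto simp: algebra_simps)
  also have "\<dots> = y i - (\<Sum>j<n. B $$ (i,j) * y j) - (\<Sum>j<n. C $$ (i,j) * y j)"
    using i by (simp add: sum_subtractf sum.delta)
  finally show ?thesis .
qed

lemma part2:
  fixes B C Ah Pi Q :: "real mat"
  assumes n: "n > 0" and B: "B \<in> carrier_mat n n" and C: "C \<in> carrier_mat n n"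
    and Ah: "Ah \<in> carrier_mat n n" and Pi: "Pi \<in> carrier_mat n n" and Q: "Q \<in> carrier_mat n n"
    and Bn: "\<And>i j. i < n \<Longrightarrow> j < n \<Longrightarrow> B $$ (i,j) \<ge> 0"
    and Cn: "\<And>i j. i < n \<Longrightarrow> j < n \<Longrightarrow> C $$ (i,j) \<ge> 0"
    and M: "Pi * Ah = 1\<^sub>m n - B - C"
    and Ahi: "invertible_mat Ah" "minv Ah \<ge> 0\<^sub>m n n"
    and Pin: "\<And>i j. i < n \<Longrightarrow> j < n \<Longrightarrow> Pi $$ (i,j) \<ge> 0" and PQ: "Pi * Q = 1\<^sub>m n"
  shows "rho (four_block_mat B C (1\<^sub>m n) (0\<^sub>m n n)) < 1"
proof -
  note mp = minv_props[OF Ah Ahi(1)]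
  define Ai where "Ai = minv Ah"
  have Ai: "Ai \<in> carrier_mat n n" "Ai * Ah = 1\<^sub>m n" "Ah * Ai = 1\<^sub>m n" using mp unfolding Ai_def by auto
  have Ain: "Ai $$ (i,j) \<ge> 0" if "i < n" "j < n" for i j
    using Ahi(2) that unfolding Ai_def less_eq_mat_def by auto
  define y where "y j = (\<Sum>k<n. Ai $$ (j,k))" for j
  have ypos: "y j > 0" if "j < n" for j unfolding y_def by (rule row_sum_pos[OF Ai(1) Ah Ai(2) Ain that])
  define My where "My i = (\<Sum>j<n. (1\<^sub>m n - B - C) $$ (i,j) * y j)" for i
  have Mypos: "My i > 0" if i: "i < n" for i
  proof -
    have "My i = (\<Sum>k<n. ((Pi * Ah) * Ai) $$ (i,k))" unfolding My_def y_def M[symmetric]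
      by (rule sum_rows_mult) (use Pi Ah Ai i in auto)
    also have "(Pi * Ah) * Ai = Pi" using Pi Ah Ai by simp
    finally show ?thesis using row_sum_pos[OF Pi Q PQ Pin i] by simp
  qed
  have Myeq: "My i = y i - (\<Sum>j<n. B $$ (i,j) * y j) - (\<Sum>j<n. C $$ (i,j) * y j)" if "i < n" for i
    unfolding My_def by (rule sum_IBC[OF B C that])
  define f where "f i = My i / y i" for i
  define \<delta> where "\<delta> = Min (f ` {..<n})"
  have fin: "finite (f ` {..<n})" and ne: "f ` {..<n} \<noteq> {}" using n by auto
  from Min_in[OF fin ne] obtain i0 where i0: "i0 < n" "\<delta> = f i0" unfolding \<delta>_def by auto
  have dpos: "\<delta> > 0" using i0 Mypos ypos unfolding f_def by auto
  have Myge: "My i \<ge> \<delta> * y i" if i: "i < n" for i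
  proof -
    have "\<delta> \<le> f i" unfolding \<delta>_def using Min_le[OF fin] i by auto
    thus ?thesis using ypos[OF i] unfolding f_def by (simp add: le_divide_eq)
  qed
  define d where "d = min \<delta> 1"
  define \<beta> where "\<beta> = 1 - d / 2"
  have d: "d > 0" "d \<le> 1" "d \<le> \<delta>" using dpos unfolding d_def by auto
  have b: "\<beta> < 1" "\<beta> \<ge> 1/2" using d unfolding \<beta>_def by auto
  define z where "z j = (if j < n then \<beta> * y j else y (j - n))" for j
  have "rho (four_block_mat B C (1\<^sub>m n) (0\<^sub>m n n)) \<le> \<beta>"
  proof (rule rho_ub[of _ "n+n" z])
    show "four_block_mat B C (1\<^sub>m n) (0\<^sub>m n n) \<in> carrier_mat (n + n) (n + n)" using B C by auto
    show "0 < n + n" using n by auto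
    show "\<And>i j. i < n + n \<Longrightarrow> j < n + n \<Longrightarrow> 0 \<le> four_block_mat B C (1\<^sub>m n) (0\<^sub>m n n) $$ (i, j)"
      by (rule block_nonneg(2)[OF B C Bn Cn])
    show "\<And>i. i < n + n \<Longrightarrow> 0 < z i" unfolding z_def using ypos b by auto
    fix i assume i: "i < n + n"
    show "(\<Sum>j<n + n. four_block_mat B C (1\<^sub>m n) (0\<^sub>m n n) $$ (i, j) * z j) \<le> \<beta> * z i"
    proof (cases "i < n")
      case True
      have zs: "(\<Sum>j<n. B $$ (i,j) * z j) = \<beta> * (\<Sum>j<n. B $$ (i,j) * y j)"
        unfolding z_def by (simp add: sum_distrib_left algebra_simps)
      have zs2: "(\<Sum>j<n. C $$ (i,j) * z (n+j)) = (\<Sum>j<n. C $$ (i,j) * y j)"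
        unfolding z_def by simp
      have By: "(\<Sum>j<n. B $$ (i,j) * y j) \<ge> 0"
        using Bn True ypos by (intro sum_nonneg mult_nonneg_nonneg) (auto intro: less_imp_le)
      have yi: "y i > 0" using ypos True by auto
      have "(\<Sum>j<n + n. four_block_mat B C (1\<^sub>m n) (0\<^sub>m n n) $$ (i, j) * z j)
          = \<beta> * (\<Sum>j<n. B $$ (i,j) * y j) + (\<Sum>j<n. C $$ (i,j) * y j)"
        using block_sum[OF B C i] True zs zs2 by simp
      also have "\<dots> = y i - (1 - \<beta>) * (\<Sum>j<n. B $$ (i,j) * y j) - My i"
        using Myeq[OF True] by (simp add: algebra_simps)
      also have "\<dots> \<le> y i - My i" using By b by (simp add: mult_nonneg_nonneg)
      also have "\<dots> \<le> y i - d * y i" using Myge[OF True] d yi by (smt (verit) mult_right_mono)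
      also have "\<dots> \<le> \<beta> * \<beta> * y i"
      proof -
        have "1 - d \<le> \<beta> * \<beta>" unfolding \<beta>_def by (simp add: algebra_simps power2_eq_square)
        hence "(1 - d) * y i \<le> \<beta> * \<beta> * y i" using yi by (intro mult_right_mono) auto
        thus ?thesis by (simp add: algebra_simps)
      qed
      also have "\<dots> = \<beta> * z i" unfolding z_def using True by simp
      finally show ?thesis .
    next
      case False
      have "(\<Sum>j<n + n. four_block_mat B C (1\<^sub>m n) (0\<^sub>m n n) $$ (i, j) * z j) = z (i - n)"
        using block_sum[OF B C i] False by simp
      also have "\<dots> = \<beta> * z i" unfolding z_def using False i by auto
      finally show ?thesis by simp
    qed
  qed
  thus ?thesis using b by auto
qed

lemma part1:
  fixes B1 C1 B2 C2 :: "real mat"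
  assumes n: "n > 0" and B1: "B1 \<in> carrier_mat n n" and C1: "C1 \<in> carrier_mat n n"
    and B2: "B2 \<in> carrier_mat n n" and C2: "C2 \<in> carrier_mat n n"
    and B1n: "\<And>i j. i < n \<Longrightarrow> j < n \<Longrightarrow> B1 $$ (i,j) \<ge> 0"
    and C1n: "\<And>i j. i < n \<Longrightarrow> j < n \<Longrightarrow> C1 $$ (i,j) \<ge> 0"
    and B2n: "\<And>i j. i < n \<Longrightarrow> j < n \<Longrightarrow> B2 $$ (i,j) \<ge> 0"
    and C2n: "\<And>i j. i < n \<Longrightarrow> j < n \<Longrightarrow> C2 $$ (i,j) \<ge> 0"
    and cB: "\<And>i j. i < n \<Longrightarrow> j < n \<Longrightarrow> B2 $$ (i,j) \<le> B1 $$ (i,j)"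
    and cBC: "\<And>i j. i < n \<Longrightarrow> j < n \<Longrightarrow> B1 $$ (i,j) + C1 $$ (i,j) \<le> B2 $$ (i,j) + C2 $$ (i,j)"
    and r2: "rho (four_block_mat B2 C2 (1\<^sub>m n) (0\<^sub>m n n)) < 1"
  shows "rho (four_block_mat B1 C1 (1\<^sub>m n) (0\<^sub>m n n)) \<le> rho (four_block_mat B2 C2 (1\<^sub>m n) (0\<^sub>m n n))"
proof (rule ccontr)
  let ?W1 = "four_block_mat B1 C1 (1\<^sub>m n) (0\<^sub>m n n)"
  let ?W2 = "four_block_mat B2 C2 (1\<^sub>m n) (0\<^sub>m n n)"
  assume "\<not> ?thesis"
  hence gt: "rho ?W1 > rho ?W2" by auto
  define \<beta> where "\<beta> = (rho ?W2 + min (rho ?W1) 1) / 2"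
  have b: "rho ?W2 < \<beta>" "\<beta> \<le> 1" "\<beta> < rho ?W1" using gt r2 unfolding \<beta>_def by auto
  have W2: "?W2 \<in> carrier_mat (n+n) (n+n)" using B2 C2 by auto
  have nn: "0 < n + n" using n by auto
  from rho_lt_vec[OF W2 nn block_nonneg(2)[OF B2 C2 B2n C2n] b(1)]
  obtain z where zpos: "\<And>i. i < n + n \<Longrightarrow> z i > 0"
    and zle: "\<And>i. i < n + n \<Longrightarrow> (\<Sum>j<n+n. ?W2 $$ (i,j) * z j) \<le> \<beta> * z i" by blast
  have xy: "z j \<le> z (n + j)" if j: "j < n" for j
  proof -
    have "z j = (\<Sum>j'<n+n. ?W2 $$ (n+j,j') * z j')" using block_sum[OF B2 C2, of "n+j" z] j by simp
    also have "\<dots> \<le> \<beta> * z (n+j)" using zle[of "n+j"] j by auto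
    also have "\<dots> \<le> z (n+j)" using b(2) zpos[of "n+j"] j by (simp add: mult_left_le_one_le)
    finally show ?thesis .
  qed
  have "rho ?W1 \<le> \<beta>"
  proof (rule rho_ub[of _ "n+n" z])
    show "?W1 \<in> carrier_mat (n + n) (n + n)" using B1 C1 by auto
    show "0 < n + n" using n by auto
    show "\<And>i j. i < n + n \<Longrightarrow> j < n + n \<Longrightarrow> 0 \<le> ?W1 $$ (i, j)"
      by (rule block_nonneg(2)[OF B1 C1 B1n C1n])
    show "\<And>i. i < n + n \<Longrightarrow> 0 < z i" by (rule zpos)
    fix i assume i: "i < n + n"
    show "(\<Sum>j<n + n. ?W1 $$ (i, j) * z j) \<le> \<beta> * z i"
    proof (cases "i < n")
      case True
      have tm: "B1 $$ (i,j) * z j + C1 $$ (i,j) * z (n+j) \<le> B2 $$ (i,j) * z j + C2 $$ (i,j) * z (n+j)"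
        if j: "j < n" for j
      proof -
        have e: "(B2 $$ (i,j) * z j + C2 $$ (i,j) * z (n+j)) - (B1 $$ (i,j) * z j + C1 $$ (i,j) * z (n+j))
          = (B1 $$ (i,j) - B2 $$ (i,j)) * (z (n+j) - z j)
            + ((B2 $$ (i,j) + C2 $$ (i,j)) - (B1 $$ (i,j) + C1 $$ (i,j))) * z (n+j)"
          by (simp add: algebra_simps)
        have "(B1 $$ (i,j) - B2 $$ (i,j)) * (z (n+j) - z j) \<ge> 0"
          using cB[OF True j] xy[OF j] by auto
        moreover have "((B2 $$ (i,j) + C2 $$ (i,j)) - (B1 $$ (i,j) + C1 $$ (i,j))) * z (n+j) \<ge> 0"
          using cBC[OF True j] zpos[of "n+j"] j by auto
        ultimately show ?thesis using e by linarith
      qed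
      have "(\<Sum>j<n + n. ?W1 $$ (i, j) * z j) = (\<Sum>j<n. B1 $$ (i,j) * z j + C1 $$ (i,j) * z (n+j))"
        using block_sum[OF B1 C1 i] True by (simp add: sum.distrib)
      also have "\<dots> \<le> (\<Sum>j<n. B2 $$ (i,j) * z j + C2 $$ (i,j) * z (n+j))"
        using tm by (intro sum_mono) auto
      also have "\<dots> = (\<Sum>j<n + n. ?W2 $$ (i, j) * z j)"
        using block_sum[OF B2 C2 i] True by (simp add: sum.distrib)
      also have "\<dots> \<le> \<beta> * z i" by (rule zle[OF i])
      finally show ?thesis .
    next
      case False
      have "(\<Sum>j<n + n. ?W1 $$ (i, j) * z j) = (\<Sum>j<n + n. ?W2 $$ (i, j) * z j)"
        using block_sum[OF B1 C1 i] block_sum[OF B2 C2 i] False by simp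
      also have "\<dots> \<le> \<beta> * z i" by (rule zle[OF i])
      finally show ?thesis .
    qed
  qed
  thus False using b(3) by auto
qed

theorem corollary3p14:
  fixes n :: nat and A P1 R1 S1 P2 R2 S2 P3 R3 S3 P4 R4 S4 :: "real mat"
  assumes n: "n > 0"
    and dims: "A \<in> carrier_mat n n"
      "P1 \<in> carrier_mat n n" "R1 \<in> carrier_mat n n" "S1 \<in> carrier_mat n n"
      "P2 \<in> carrier_mat n n" "R2 \<in> carrier_mat n n" "S2 \<in> carrier_mat n n"
      "P3 \<in> carrier_mat n n" "R3 \<in> carrier_mat n n" "S3 \<in> carrier_mat n n"
      "P4 \<in> carrier_mat n n" "R4 \<in> carrier_mat n n" "S4 \<in> carrier_mat n n"
    and mono: "monotone_mat A"
    and spl1: "double_weak_regular_splitting A P1 R1 S1"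
    and spl2: "double_weak_regular_splitting A P2 R2 S2"
    and spl3: "double_weak_regular_splitting A P3 R3 S3"
    and spl4: "double_weak_regular_splitting A P4 R4 S4"
    and sp1: "1 \<notin> spectrum (S2 * minv P1)"
    and sp2: "1 \<notin> spectrum (S4 * minv P3)"
    and Ah1: "invertible_mat ((1\<^sub>m n - S2 * minv P1) * A)"
             "minv ((1\<^sub>m n - S2 * minv P1) * A) \<ge> 0\<^sub>m n n"
    and Ah2: "invertible_mat ((1\<^sub>m n - S4 * minv P3) * A)"
             "minv ((1\<^sub>m n - S4 * minv P3) * A) \<ge> 0\<^sub>m n n"
    and cmpA: "minv P2 * ((1\<^sub>m n - S2 * minv P1) * A) \<ge> minv P4 * ((1\<^sub>m n - S4 * minv P3) * A)"
    and cmpR: "minv P2 * (R2 - S2 * minv P1 * R1) \<ge> minv P4 * (R4 - S4 * minv P3 * R3)"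
  shows "rho (four_block_mat (minv P2 * R2 - minv P2 * S2 * minv P1 * R1)
                             (minv P2 * S2 * minv P1 * S1) (1\<^sub>m n) (0\<^sub>m n n))
         \<le> rho (four_block_mat (minv P4 * R4 - minv P4 * S4 * minv P3 * R3)
                             (minv P4 * S4 * minv P3 * S3) (1\<^sub>m n) (0\<^sub>m n n))
       \<and> rho (four_block_mat (minv P4 * R4 - minv P4 * S4 * minv P3 * R3)
                             (minv P4 * S4 * minv P3 * S3) (1\<^sub>m n) (0\<^sub>m n n)) < 1"
proof -
  note c1 = combo[OF dims(1-4) dims(5-7) spl1 spl2]
  note c2 = combo[OF dims(1) dims(8-10) dims(11-13) spl3 spl4]
  define B1 where "B1 = minv P2 * R2 - minv P2 * S2 * minv P1 * R1"
  define C1 where "C1 = minv P2 * S2 * minv P1 * S1"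
  define B2 where "B2 = minv P4 * R4 - minv P4 * S4 * minv P3 * R3"
  define C2 where "C2 = minv P4 * S4 * minv P3 * S3"
  note c1 = c1[folded B1_def C1_def]
  note c2 = c2[folded B2_def C2_def]
  note i4 = split_inv_mult[OF dims(1) dims(11-13) spl4]
  note m4 = minv_props[OF dims(11)]
  have P4inv: "invertible_mat P4" using spl4 unfolding double_weak_regular_splitting_def by auto
  have r2: "rho (four_block_mat B2 C2 (1\<^sub>m n) (0\<^sub>m n n)) < 1"
    by (rule part2[OF n c2(1) c2(2) _ i4(2) dims(11) c2(3) c2(4) c2(5) Ah2 i4(5)])
       (use dims m4(3)[OF P4inv] in auto)
  have cB: "B2 $$ (i,j) \<le> B1 $$ (i,j)" if "i < n" "j < n" for i j
    using cmpR that c1(1) c2(1) unfolding c1(6) c2(6) less_eq_mat_def by auto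
  have cBC: "B1 $$ (i,j) + C1 $$ (i,j) \<le> B2 $$ (i,j) + C2 $$ (i,j)" if ij: "i < n" "j < n" for i j
  proof -
    have "(1\<^sub>m n - B2 - C2) $$ (i,j) \<le> (1\<^sub>m n - B1 - C1) $$ (i,j)"
      using cmpA ij c1(1,2) c2(1,2) unfolding c1(5) c2(5) less_eq_mat_def by auto
    thus ?thesis using ij c1(1,2) c2(1,2) by auto
  qed
  have r12: "rho (four_block_mat B1 C1 (1\<^sub>m n) (0\<^sub>m n n)) \<le> rho (four_block_mat B2 C2 (1\<^sub>m n) (0\<^sub>m n n))"
    by (rule part1[OF n c1(1) c1(2) c2(1) c2(2) c1(3) c1(4) c2(3) c2(4) cB cBC r2])
  show ?thesis using r12 r2 unfolding B1_def C1_def B2_def C2_def by auto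
qed
end
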